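(* Under the setting and assumptions in the context, $$\max_{z\in\{0,1\}}\Pr(Y=1,R=0\mid Z=z)\ \le\ \Pr(Y(0)=1)\ \le\ \min_{z\in\{0,1\}}\Pr(Y=1\mid Z=z),$$ $$\max_{z\in\{0,1\}}\Pr(Y=1\mid Z=z)\ \le\ \Pr(Y(1)=1)\ \le\ 1-\max_{z\in\{0,1\}}\Pr(Y=0,R=1\mid Z=z).$$
   Context: Units are drawn from a population (a probability space). Each unit has a binary assignment $Z\in\{0,1\}$ with $0<\Pr(Z=1)<1$, binary potential recommendations $R(0),R(1)\in\{0,1\}$, and binary potential outcomes $Y(0),Y(1)\in\{0,1\}$ indexed by the recommendation only (exclusion restriction). Observed quantities are $R=R(Z)$ and $Y=Y(R(Z))$. Assumptions: (Randomization) $Z$ is independent of $(R(0),R(1),Y(0),Y(1))$; (Monotonicity) $Y(1)\ge Y(0)$ almost surely. *)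

theory Defs
  imports "HOL-Probability.Probability"
begin

text \<open>Binary variables are modelled as bool-valued random variables (True = 1, False = 0).
Observed recommendation R = R(Z), observed outcome Y = Y(R(Z)).\<close>

definition obsR :: "('a \<Rightarrow> bool) \<Rightarrow> ('a \<Rightarrow> bool) \<Rightarrow> ('a \<Rightarrow> bool) \<Rightarrow> 'a \<Rightarrow> bool" where
  "obsR Z R0 R1 \<omega> = (if Z \<omega> then R1 \<omega> else R0 \<omega>)"

definition obsY :: "('a \<Rightarrow> bool) \<Rightarrow> ('a \<Rightarrow> bool) \<Rightarrow> ('a \<Rightarrow> bool)
    \<Rightarrow> ('a \<Rightarrow> bool) \<Rightarrow> ('a \<Rightarrow> bool) \<Rightarrow> 'a \<Rightarrow> bool" where
  "obsY Z R0 R1 Y0 Y1 \<omega> = (if obsR Z R0 R1 \<omega> then Y1 \<omega> else Y0 \<omega>)"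

end

theory Submission
  imports Defs
begin

theorem mainTheorem5:
  fixes M :: "'a measure" and Z R0 R1 Y0 Y1 :: "'a \<Rightarrow> bool"
  assumes ps: "prob_space M"
    and meas: "Z \<in> measurable M (count_space UNIV)" "R0 \<in> measurable M (count_space UNIV)"
      "R1 \<in> measurable M (count_space UNIV)" "Y0 \<in> measurable M (count_space UNIV)"
      "Y1 \<in> measurable M (count_space UNIV)"
    and Zpos: "0 < \<P>(\<omega> in M. Z \<omega>)" and Zlt1: "\<P>(\<omega> in M. Z \<omega>) < 1"
    and rand: "\<forall>(A :: bool set) (B :: (bool \<times> bool \<times> bool \<times> bool) set).
                 \<P>(\<omega> in M. Z \<omega> \<in> A \<and> (R0 \<omega>, R1 \<omega>, Y0 \<omega>, Y1 \<omega>) \<in> B)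
                 = \<P>(\<omega> in M. Z \<omega> \<in> A) * \<P>(\<omega> in M. (R0 \<omega>, R1 \<omega>, Y0 \<omega>, Y1 \<omega>) \<in> B)"
    and mono: "AE \<omega> in M. Y0 \<omega> \<longrightarrow> Y1 \<omega>"
  defines "R \<equiv> obsR Z R0 R1" and "Y \<equiv> obsY Z R0 R1 Y0 Y1"
  shows "max (\<P>(\<omega> in M. Y \<omega> \<and> \<not> R \<omega> \<bar> Z \<omega>)) (\<P>(\<omega> in M. Y \<omega> \<and> \<not> R \<omega> \<bar> \<not> Z \<omega>))
           \<le> \<P>(\<omega> in M. Y0 \<omega>)
      \<and> \<P>(\<omega> in M. Y0 \<omega>)
           \<le> min (\<P>(\<omega> in M. Y \<omega> \<bar> Z \<omega>)) (\<P>(\<omega> in M. Y \<omega> \<bar> \<not> Z \<omega>))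
      \<and> max (\<P>(\<omega> in M. Y \<omega> \<bar> Z \<omega>)) (\<P>(\<omega> in M. Y \<omega> \<bar> \<not> Z \<omega>))
           \<le> \<P>(\<omega> in M. Y1 \<omega>)
      \<and> \<P>(\<omega> in M. Y1 \<omega>)
           \<le> 1 - max (\<P>(\<omega> in M. \<not> Y \<omega> \<and> R \<omega> \<bar> Z \<omega>)) (\<P>(\<omega> in M. \<not> Y \<omega> \<and> R \<omega> \<bar> \<not> Z \<omega>))"
proof -
  interpret prob_space M by (rule ps)
  note [measurable] = meas
  define T where "T \<omega> = (R0 \<omega>, R1 \<omega>, Y0 \<omega>, Y1 \<omega>)" for \<omega>
  have Zc: "\<P>(\<omega> in M. \<not> Z \<omega>) = 1 - \<P>(\<omega> in M. Z \<omega>)"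
    by (rule prob_neg) measurable
  have Zn: "0 < \<P>(\<omega> in M. \<not> Z \<omega>)" using Zc Zlt1 by simp
  have k1: "cond_prob M P Z = \<P>(\<omega> in M. g (T \<omega>))"
    if h: "\<And>\<omega>. (P \<omega> \<and> Z \<omega>) = (g (T \<omega>) \<and> Z \<omega>)" for P g
  proof -
    have "\<P>(\<omega> in M. P \<omega> \<and> Z \<omega>) = \<P>(\<omega> in M. Z \<omega> \<in> {True} \<and> T \<omega> \<in> {t. g t})"
      using h by (intro arg_cong[where f=prob]) auto
    also have "\<dots> = \<P>(\<omega> in M. Z \<omega> \<in> {True}) * \<P>(\<omega> in M. T \<omega> \<in> {t. g t})"
      using rand unfolding T_def by blast
    finally show ?thesis using Zpos by (simp add: cond_prob_def)
  qed
  have k0: "cond_prob M P (\<lambda>\<omega>. \<not> Z \<omega>) = \<P>(\<omega> in M. g (T \<omega>))"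
    if h: "\<And>\<omega>. (P \<omega> \<and> \<not> Z \<omega>) = (g (T \<omega>) \<and> \<not> Z \<omega>)" for P g
  proof -
    have "\<P>(\<omega> in M. P \<omega> \<and> \<not> Z \<omega>) = \<P>(\<omega> in M. Z \<omega> \<in> {False} \<and> T \<omega> \<in> {t. g t})"
      using h by (intro arg_cong[where f=prob]) auto
    also have "\<dots> = \<P>(\<omega> in M. Z \<omega> \<in> {False}) * \<P>(\<omega> in M. T \<omega> \<in> {t. g t})"
      using rand unfolding T_def by blast
    finally show ?thesis using Zn by (simp add: cond_prob_def)
  qed
  have a1: "\<P>(\<omega> in M. Y \<omega> \<and> \<not> R \<omega> \<bar> Z \<omega>) = \<P>(\<omega> in M. \<not> R1 \<omega> \<and> Y0 \<omega>)"
    using k1[of _ "\<lambda>(r0,r1,y0,y1). \<not> r1 \<and> y0"] by (auto simp: T_def R_def Y_def obsR_def obsY_def)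
  have a0: "\<P>(\<omega> in M. Y \<omega> \<and> \<not> R \<omega> \<bar> \<not> Z \<omega>) = \<P>(\<omega> in M. \<not> R0 \<omega> \<and> Y0 \<omega>)"
    using k0[of _ "\<lambda>(r0,r1,y0,y1). \<not> r0 \<and> y0"] by (auto simp: T_def R_def Y_def obsR_def obsY_def)
  have b1: "\<P>(\<omega> in M. Y \<omega> \<bar> Z \<omega>) = \<P>(\<omega> in M. (if R1 \<omega> then Y1 \<omega> else Y0 \<omega>))"
    using k1[of _ "\<lambda>(r0,r1,y0,y1). (if r1 then y1 else y0)"] by (auto simp: T_def R_def Y_def obsR_def obsY_def)
  have b0: "\<P>(\<omega> in M. Y \<omega> \<bar> \<not> Z \<omega>) = \<P>(\<omega> in M. (if R0 \<omega> then Y1 \<omega> else Y0 \<omega>))"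
    using k0[of _ "\<lambda>(r0,r1,y0,y1). (if r0 then y1 else y0)"] by (auto simp: T_def R_def Y_def obsR_def obsY_def)
  have c1: "\<P>(\<omega> in M. \<not> Y \<omega> \<and> R \<omega> \<bar> Z \<omega>) = \<P>(\<omega> in M. R1 \<omega> \<and> \<not> Y1 \<omega>)"
    using k1[of _ "\<lambda>(r0,r1,y0,y1). r1 \<and> \<not> y1"] by (auto simp: T_def R_def Y_def obsR_def obsY_def)
  have c0: "\<P>(\<omega> in M. \<not> Y \<omega> \<and> R \<omega> \<bar> \<not> Z \<omega>) = \<P>(\<omega> in M. R0 \<omega> \<and> \<not> Y1 \<omega>)"
    using k0[of _ "\<lambda>(r0,r1,y0,y1). r0 \<and> \<not> y1"] by (auto simp: T_def R_def Y_def obsR_def obsY_def)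
  have mono_le: "\<P>(\<omega> in M. P \<omega>) \<le> \<P>(\<omega> in M. Q \<omega>)"
    if "AE \<omega> in M. P \<omega> \<longrightarrow> Q \<omega>" "Measurable.pred M Q" for P Q
    by (rule finite_measure_mono_AE) (use that in auto)
  have compl: "\<P>(\<omega> in M. Y1 \<omega>) \<le> 1 - \<P>(\<omega> in M. r \<omega> \<and> \<not> Y1 \<omega>)" if [measurable]: "Measurable.pred M r" for r
  proof -
    have "\<P>(\<omega> in M. r \<omega> \<and> \<not> Y1 \<omega>) \<le> \<P>(\<omega> in M. \<not> Y1 \<omega>)"
      by (rule mono_le) auto
    also have "\<dots> = 1 - \<P>(\<omega> in M. Y1 \<omega>)" by (rule prob_neg) measurable
    finally show ?thesis by simp
  qed
  have s1: "\<P>(\<omega> in M. \<not> R1 \<omega> \<and> Y0 \<omega>) \<le> \<P>(\<omega> in M. Y0 \<omega>)" by (rule mono_le) auto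
  have s0: "\<P>(\<omega> in M. \<not> R0 \<omega> \<and> Y0 \<omega>) \<le> \<P>(\<omega> in M. Y0 \<omega>)" by (rule mono_le) auto
  have t1: "\<P>(\<omega> in M. Y0 \<omega>) \<le> \<P>(\<omega> in M. (if R1 \<omega> then Y1 \<omega> else Y0 \<omega>))"
    by (rule mono_le) (use mono in auto)
  have t0: "\<P>(\<omega> in M. Y0 \<omega>) \<le> \<P>(\<omega> in M. (if R0 \<omega> then Y1 \<omega> else Y0 \<omega>))"
    by (rule mono_le) (use mono in auto)
  have u1: "\<P>(\<omega> in M. (if R1 \<omega> then Y1 \<omega> else Y0 \<omega>)) \<le> \<P>(\<omega> in M. Y1 \<omega>)"
    by (rule mono_le) (use mono in auto)
  have u0: "\<P>(\<omega> in M. (if R0 \<omega> then Y1 \<omega> else Y0 \<omega>)) \<le> \<P>(\<omega> in M. Y1 \<omega>)"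
    by (rule mono_le) (use mono in auto)
  have v1: "\<P>(\<omega> in M. Y1 \<omega>) \<le> 1 - \<P>(\<omega> in M. R1 \<omega> \<and> \<not> Y1 \<omega>)" by (rule compl) measurable
  have v0: "\<P>(\<omega> in M. Y1 \<omega>) \<le> 1 - \<P>(\<omega> in M. R0 \<omega> \<and> \<not> Y1 \<omega>)" by (rule compl) measurable
  show ?thesis unfolding a1 a0 b1 b0 c1 c0
    using s1 s0 t1 t0 u1 u0 v1 v0 by simp
qed

end
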